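(* Let $(\mathsf{X},\mu)$, $(\mathsf{Y},\nu)$ be Polish probability spaces (with $d$ a metric on $\mathsf{X}$), $c:\mathsf{X}\times\mathsf{Y}\to[0,\infty)$ continuous, $\pi_\varepsilon$ the $(c,\varepsilon)$-cyclically invariant coupling for each $\varepsilon>0$ (assumed to exist), and assume $\pi_\varepsilon\to\pi_*$ weakly as $\varepsilon\to0$ for some $\pi_*\in\Pi(\mu,\nu)$. Let $\Gamma:=\operatorname{spt}\pi_*$, $\mathsf{X}_0:=\operatorname{proj}_{\mathsf{X}}\Gamma$, $\mathsf{Y}_0:=\operatorname{proj}_{\mathsf{Y}}\Gamma$. Assume: (a) $\Gamma=\operatorname{graph}T$ for a map $T:\mathsf{X}_0\to\mathsf{Y}$; (b) $\mathsf{X}_0$ is arcwise connected, i.e., any two points are connected by a continuous curve in $\mathsf{X}_0$ of finite length; (c) for every compact $K\subset\mathsf{X}_0$, uniformly over $x_1,x_2\in K$, $$|c(x_1,T(x_1))+c(x_2,T(x_2))-c(x_1,T(x_2))-c(x_2,T(x_1))|=o(d(x_1,x_2)).$$ If $(x,y),(x',y')\in\mathsf{X}_0\times\mathsf{Y}_0$ are such that $(x',y),(x,y')\in\Gamma$, then $$I(x,y)+I(x',y')\ge c(x,y)+c(x',y')-c(x,y')-c(x',y).$$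
   Context: $\Pi(\mu,\nu)$ is the set of couplings of $\mu,\nu$ and $P:=\mu\otimes\nu$. A coupling $\pi$ is $(c,\varepsilon)$-cyclically invariant if $\pi\sim P$ and its density admits a version $\frac{d\pi}{dP}:\mathsf{X}\times\mathsf{Y}\to(0,\infty)$ with $\prod_{i=1}^k\frac{d\pi}{dP}(x_i,y_i)=\exp\big(-\frac1\varepsilon[\sum_{i=1}^k c(x_i,y_i)-\sum_{i=1}^k c(x_i,y_{i+1})]\big)\prod_{i=1}^k\frac{d\pi}{dP}(x_i,y_{i+1})$ for all $k$ and points, $y_{k+1}:=y_1$. The function $I$ is $I(x,y):=\sup_{k\ge2}\sup_{(x_i,y_i)_{i=2}^k\subset\Gamma}\sup_{\sigma\in\Sigma(k)}\sum_{i=1}^k c(x_i,y_i)-\sum_{i=1}^k c(x_i,y_{\sigma(i)})$ with $(x_1,y_1):=(x,y)$ and $\Sigma(k)$ the permutations of $\{1,\dots,k\}$. *)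

theory Defs
  imports "HOL-Probability.Probability"
begin

definition couplings :: "'x::topological_space measure \<Rightarrow> 'y::topological_space measure \<Rightarrow> ('x \<times> 'y) measure set" where
  "couplings \<mu> \<nu> = {\<pi>. prob_space \<pi> \<and> sets \<pi> = sets (borel :: ('x \<times> 'y) measure)
      \<and> distr \<pi> \<mu> fst = \<mu> \<and> distr \<pi> \<nu> snd = \<nu>}"

definition cyc_invariant ::
  "('x \<Rightarrow> 'y \<Rightarrow> real) \<Rightarrow> real \<Rightarrow> 'x measure \<Rightarrow> 'y measure \<Rightarrow> ('x \<times> 'y) measure \<Rightarrow> bool" where
  "cyc_invariant c \<epsilon> \<mu> \<nu> \<pi> \<longleftrightarrow>
     absolutely_continuous (\<mu> \<Otimes>\<^sub>M \<nu>) \<pi> \<and> absolutely_continuous \<pi> (\<mu> \<Otimes>\<^sub>M \<nu>) \<and>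
     (\<exists>f :: 'x \<times> 'y \<Rightarrow> real. f \<in> borel_measurable (\<mu> \<Otimes>\<^sub>M \<nu>) \<and> (\<forall>z. f z > 0) \<and>
        \<pi> = density (\<mu> \<Otimes>\<^sub>M \<nu>) (\<lambda>z. ennreal (f z)) \<and>
        (\<forall>k::nat. \<forall>xs :: nat \<Rightarrow> 'x. \<forall>ys :: nat \<Rightarrow> 'y. k \<ge> 1 \<longrightarrow>
            (\<Prod>i<k. f (xs i, ys i)) =
            exp (- (1 / \<epsilon>) * ((\<Sum>i<k. c (xs i) (ys i)) - (\<Sum>i<k. c (xs i) (ys (Suc i mod k)))))
              * (\<Prod>i<k. f (xs i, ys (Suc i mod k)))))"

definition weak_conv_at0 :: "(real \<Rightarrow> 'a::topological_space measure) \<Rightarrow> 'a measure \<Rightarrow> bool" where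
  "weak_conv_at0 P Q \<longleftrightarrow>
     (\<forall>g :: 'a \<Rightarrow> real. continuous_on UNIV g \<and> bounded (range g) \<longrightarrow>
        ((\<lambda>\<epsilon>. \<integral>z. g z \<partial>P \<epsilon>) \<longlongrightarrow> (\<integral>z. g z \<partial>Q)) (at_right 0))"

definition spt :: "'a::topological_space measure \<Rightarrow> 'a set" where
  "spt M = {z. \<forall>U. open U \<and> z \<in> U \<longrightarrow> emeasure M U > 0}"

definition finite_length :: "(real \<Rightarrow> 'a::metric_space) \<Rightarrow> bool" where
  "finite_length g \<longleftrightarrow> (\<exists>B. \<forall>n::nat. \<forall>t :: nat \<Rightarrow> real.
      t 0 = 0 \<and> t n = 1 \<and> (\<forall>i<n. t i \<le> t (Suc i)) \<longrightarrow>
      (\<Sum>i<n. dist (g (t i)) (g (t (Suc i)))) \<le> B)"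

text \<open>The function I (extended-real valued; the supremum may be infinite).
  Points are indexed 1..k, with (x_1,y_1) = (x,y) and (x_i,y_i) in Gamma for i = 2..k.\<close>
definition Ifun :: "('x \<Rightarrow> 'y \<Rightarrow> real) \<Rightarrow> ('x \<times> 'y) set \<Rightarrow> 'x \<Rightarrow> 'y \<Rightarrow> ereal" where
  "Ifun c \<Gamma> x y = (SUP s \<in> {s. \<exists>k::nat. \<exists>xs ys \<sigma>. k \<ge> 2 \<and> xs 1 = x \<and> ys 1 = y \<and>
        (\<forall>i\<in>{2..k}. (xs i, ys i) \<in> \<Gamma>) \<and> \<sigma> permutes {1..k} \<and>
        s = (\<Sum>i=1..k. c (xs i) (ys i)) - (\<Sum>i=1..k. c (xs i) (ys (\<sigma> i)))}. ereal s)"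

end

theory Submission
  imports Defs
begin

lemma cyc_perm:
  assumes "n \<ge> (2::nat)"
  shows "(\<lambda>i. if i \<in> {1..n} then (if i < n then Suc i else 1) else i) permutes {1..n}"
proof (rule bij_imp_permutes)
  let ?s = "(\<lambda>i. if i \<in> {1..n} then (if i < n then Suc i else 1) else i)"
  let ?t = "(\<lambda>i. if i \<in> {1..n} then (if i > 1 then i - 1 else n) else i)"
  show "bij_betw ?s {1..n} {1..n}"
    by (rule bij_betw_byWitness[where f'="?t"]) (use assms in auto)
qed auto

lemma chain:
  fixes c :: "'x \<Rightarrow> 'y \<Rightarrow> real" and z :: "nat \<Rightarrow> 'x"
  assumes n: "n \<ge> 2" and G: "\<And>i. 1 \<le> i \<Longrightarrow> i < n \<Longrightarrow> (z i, T (z i)) \<in> \<Gamma>"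
  shows "ereal (c (z 0) (T (z n)) + (\<Sum>j=1..<n. c (z j) (T (z j)))
             - (\<Sum>j<n. c (z j) (T (z (Suc j))))) \<le> Ifun c \<Gamma> (z 0) (T (z n))"
proof -
  define \<sigma> where "\<sigma> = (\<lambda>i. if i \<in> {1..n} then (if i < n then Suc i else 1) else i)"
  define xs where "xs = (\<lambda>i. z (i - 1))"
  define ys where "ys = (\<lambda>i::nat. if i = 1 then T (z n) else T (z (i - 1)))"
  have p: "\<sigma> permutes {1..n}" unfolding \<sigma>_def using cyc_perm[OF n] .
  have s1: "(\<Sum>i=1..n. c (xs i) (ys i)) = c (z 0) (T (z n)) + (\<Sum>j=1..<n. c (z j) (T (z j)))"
  proof -
    have "(\<Sum>i=1..n. c (xs i) (ys i)) = c (xs 1) (ys 1) + (\<Sum>i=2..n. c (xs i) (ys i))"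
      using n by (simp add: sum.atLeast_Suc_atMost numeral_2_eq_2)
    also have "(\<Sum>i=2..n. c (xs i) (ys i)) = (\<Sum>i=2..n. c (z (i-1)) (T (z (i-1))))"
      by (rule sum.cong) (auto simp: xs_def ys_def)
    also have "\<dots> = (\<Sum>j=1..<n. c (z j) (T (z j)))"
    proof -
      have "(\<Sum>i=2..n. c (z (i-1)) (T (z (i-1)))) = (\<Sum>j=1..<n. c (z (Suc j - 1)) (T (z (Suc j - 1))))"
        by (rule sum.reindex_bij_witness[of _ "\<lambda>j. j + 1" "\<lambda>i. i - 1"]) auto
      then show ?thesis by simp
    qed
    finally show ?thesis by (simp add: xs_def ys_def)
  qed
  have s2: "(\<Sum>i=1..n. c (xs i) (ys (\<sigma> i))) = (\<Sum>j<n. c (z j) (T (z (Suc j))))"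
  proof -
    have "(\<Sum>i=1..n. c (xs i) (ys (\<sigma> i))) = (\<Sum>i=1..n. c (z (i-1)) (T (z (Suc (i-1)))))"
      by (rule sum.cong) (auto simp: xs_def ys_def \<sigma>_def)
    also have "\<dots> = (\<Sum>j<n. c (z j) (T (z (Suc j))))"
      by (rule sum.reindex_bij_witness[of _ "\<lambda>j. j + 1" "\<lambda>i. i - 1"]) auto
    finally show ?thesis .
  qed
  have "c (z 0) (T (z n)) + (\<Sum>j=1..<n. c (z j) (T (z j))) - (\<Sum>j<n. c (z j) (T (z (Suc j))))
     \<in> {s. \<exists>k::nat. \<exists>xs ys \<sigma>. k \<ge> 2 \<and> xs 1 = z 0 \<and> ys 1 = T (z n) \<and>
        (\<forall>i\<in>{2..k}. (xs i, ys i) \<in> \<Gamma>) \<and> \<sigma> permutes {1..k} \<and>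
        s = (\<Sum>i=1..k. c (xs i) (ys i)) - (\<Sum>i=1..k. c (xs i) (ys (\<sigma> i)))}"
    apply (simp only: mem_Collect_eq)
    apply (rule exI[of _ n], rule exI[of _ xs], rule exI[of _ ys], rule exI[of _ \<sigma>])
    using n p s1 s2 G by (auto simp: xs_def ys_def)
  then show ?thesis unfolding Ifun_def by (rule SUP_upper)
qed

lemma sum_shift_aux:
  fixes f :: "nat \<Rightarrow> real"
  assumes "n \<ge> 1"
  shows "(\<Sum>j<n. f (Suc j)) = (\<Sum>j=1..<n. f j) + f n"
    and "(\<Sum>j<n. f j) = f 0 + (\<Sum>j=1..<n. f j)"
proof -
  have "(\<Sum>j<n. f (Suc j)) = (\<Sum>j=1..<Suc n. f j)"
    by (rule sum.reindex_bij_witness[of _ "\<lambda>j. j - 1" "\<lambda>i. i + 1"]) auto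
  also have "\<dots> = (\<Sum>j=1..<n. f j) + f n" using assms by simp
  finally show "(\<Sum>j<n. f (Suc j)) = (\<Sum>j=1..<n. f j) + f n" .
  show "(\<Sum>j<n. f j) = f 0 + (\<Sum>j=1..<n. f j)"
    using assms by (simp add: atLeast0LessThan[symmetric] sum.atLeast_Suc_lessThan)
qed

lemma algebra_aux:
  fixes a :: "nat \<Rightarrow> nat \<Rightarrow> real"
  assumes n: "n \<ge> 1"
  shows "(a 0 n + (\<Sum>j=1..<n. a j j) - (\<Sum>j<n. a j (Suc j)))
       + (a n 0 + (\<Sum>j=1..<n. a (n-j) (n-j)) - (\<Sum>j<n. a (n-j) (n - Suc j)))
       = a 0 n + a n 0 - a 0 0 - a n n
         + (\<Sum>j<n. a j j + a (Suc j) (Suc j) - a j (Suc j) - a (Suc j) j)"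
proof -
  have r1: "(\<Sum>j<n. a (n-j) (n - Suc j)) = (\<Sum>j<n. a (Suc j) j)"
  proof -
    have "(\<Sum>j<n. a (n-j) (n - Suc j)) = (\<Sum>j<n. (\<lambda>k. a (Suc k) k) (n - Suc j))"
      by (rule sum.cong) (auto simp: Suc_diff_Suc)
    also have "\<dots> = (\<Sum>j<n. a (Suc j) j)" by (rule sum.nat_diff_reindex)
    finally show ?thesis .
  qed
  have r2: "(\<Sum>j=1..<n. a (n-j) (n-j)) = (\<Sum>j=1..<n. a j j)"
    apply (rule sum.reindex_bij_witness[where i="\<lambda>j. n - j" and j="\<lambda>j. n - j"]) apply auto done
  have r3: "(\<Sum>j<n. a (Suc j) (Suc j)) = (\<Sum>j=1..<n. a j j) + a n n"
    using sum_shift_aux(1)[OF n, of "\<lambda>j. a j j"] by simp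
  have r4: "(\<Sum>j<n. a j j) = a 0 0 + (\<Sum>j=1..<n. a j j)"
    using sum_shift_aux(2)[OF n, of "\<lambda>j. a j j"] by simp
  show ?thesis
    unfolding r1 r2 by (simp add: sum.distrib sum_subtractf r3 r4)
qed

theorem lemma4p10:
  fixes \<mu> :: "'x::polish_space measure" and \<nu> :: "'y::polish_space measure"
    and c :: "'x \<Rightarrow> 'y \<Rightarrow> real"
    and \<pi> :: "real \<Rightarrow> ('x \<times> 'y) measure" and \<pi>s :: "('x \<times> 'y) measure"
    and T :: "'x \<Rightarrow> 'y"
    and x y x' y'
  assumes "prob_space \<mu>" and "sets \<mu> = sets borel"
    and "prob_space \<nu>" and "sets \<nu> = sets borel"
    and "continuous_on UNIV (\<lambda>z. c (fst z) (snd z))" and "\<And>a b. c a b \<ge> 0"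
    and "\<And>\<epsilon>. \<epsilon> > 0 \<Longrightarrow> \<pi> \<epsilon> \<in> couplings \<mu> \<nu> \<and> cyc_invariant c \<epsilon> \<mu> \<nu> (\<pi> \<epsilon>)"
    and "\<pi>s \<in> couplings \<mu> \<nu>" and "weak_conv_at0 \<pi> \<pi>s"
    and graph: "spt \<pi>s = {(a, T a) | a. a \<in> fst ` spt \<pi>s}"
    and arc: "\<forall>a \<in> fst ` spt \<pi>s. \<forall>b \<in> fst ` spt \<pi>s. \<exists>g. path g \<and> path_image g \<subseteq> fst ` spt \<pi>s
               \<and> pathstart g = a \<and> pathfinish g = b \<and> finite_length g"
    and unif: "\<And>K. compact K \<Longrightarrow> K \<subseteq> fst ` spt \<pi>s \<Longrightarrow>
               \<forall>e>0. \<exists>\<delta>>0. \<forall>x1\<in>K. \<forall>x2\<in>K. dist x1 x2 < \<delta> \<longrightarrow>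
                 \<bar>c x1 (T x1) + c x2 (T x2) - c x1 (T x2) - c x2 (T x1)\<bar> \<le> e * dist x1 x2"
    and "x \<in> fst ` spt \<pi>s" and "x' \<in> fst ` spt \<pi>s"
    and "y \<in> snd ` spt \<pi>s" and "y' \<in> snd ` spt \<pi>s"
    and "(x', y) \<in> spt \<pi>s" and "(x, y') \<in> spt \<pi>s"
  shows "Ifun c (spt \<pi>s) x y + Ifun c (spt \<pi>s) x' y'
           \<ge> ereal (c x y + c x' y' - c x y' - c x' y)"
proof -
  define \<Gamma> where "\<Gamma> = spt \<pi>s"
  define X0 where "X0 = fst ` \<Gamma>"
  have GT: "\<And>a. a \<in> X0 \<Longrightarrow> (a, T a) \<in> \<Gamma>"
    unfolding X0_def \<Gamma>_def using graph by blast
  have yT: "y = T x'" using \<open>(x', y) \<in> spt \<pi>s\<close> graph by auto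
  have y'T: "y' = T x" using \<open>(x, y') \<in> spt \<pi>s\<close> graph by auto
  have xX: "x \<in> X0" "x' \<in> X0" using \<open>x \<in> fst ` spt \<pi>s\<close> \<open>x' \<in> fst ` spt \<pi>s\<close> by (auto simp: X0_def \<Gamma>_def)
  obtain g where g: "path g" "path_image g \<subseteq> X0" "pathstart g = x" "pathfinish g = x'" "finite_length g"
    using arc xX unfolding X0_def \<Gamma>_def by blast
  obtain B where B: "\<And>n t. t 0 = 0 \<Longrightarrow> t n = 1 \<Longrightarrow> (\<forall>i<n. t i \<le> t (Suc i)) \<Longrightarrow>
      (\<Sum>i<n. dist (g (t i)) (g (t (Suc i)))) \<le> B"
    using g(5) unfolding finite_length_def by blast
  have B0: "B \<ge> 0"
  proof -
    have "(\<Sum>i<Suc 0. dist (g (real i)) (g (real (Suc i)))) \<le> B"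
      by (rule B) auto
    then show ?thesis by (metis lessThan_Suc lessThan_0 sum.empty sum.insert finite.emptyI empty_iff add_0_right zero_le_dist order_trans)
  qed
  define \<Delta> where "\<Delta> = c x y + c x' y' - c x y' - c x' y"
  have uc: "uniformly_continuous_on {0..1} g"
    using g(1) unfolding path_def by (intro compact_uniformly_continuous) auto
  have Kc: "compact (path_image g)" using g(1) by (rule compact_path_image)
  have main: "ereal (\<Delta> - e * B) \<le> Ifun c \<Gamma> x y + Ifun c \<Gamma> x' y'" if e: "e > 0" for e
  proof -
    obtain \<delta> where \<delta>: "\<delta> > 0" "\<And>x1 x2. x1 \<in> path_image g \<Longrightarrow> x2 \<in> path_image g \<Longrightarrow> dist x1 x2 < \<delta> \<Longrightarrow>
        \<bar>c x1 (T x1) + c x2 (T x2) - c x1 (T x2) - c x2 (T x1)\<bar> \<le> e * dist x1 x2"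
      using unif[OF Kc g(2)[unfolded X0_def \<Gamma>_def]] e by meson
    obtain d where d: "d > 0" "\<And>s t. s \<in> {0..1} \<Longrightarrow> t \<in> {0..1} \<Longrightarrow> dist t s < d \<Longrightarrow> dist (g t) (g s) < \<delta>"
      using uc \<delta>(1) unfolding uniformly_continuous_on_def by metis
    define n where "n = nat \<lceil>1/d\<rceil> + 2"
    have n2: "n \<ge> 2" by (simp add: n_def)
    have nd: "1 / real n < d"
    proof -
      have "real n > 1/d" unfolding n_def by linarith
      then show ?thesis using d(1) n2 by (simp add: field_simps)
    qed
    define z where "z = (\<lambda>j::nat. g (real j / real n))"
    have zK: "z j \<in> path_image g" if "j \<le> n" for j
      unfolding z_def path_image_def using that n2 by (auto simp: field_simps)
    have z0: "z 0 = x" using g(3) by (simp add: z_def pathstart_def)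
    have zn: "z n = x'" using g(4) n2 by (simp add: z_def pathfinish_def)
    have zX: "z j \<in> X0" if "j \<le> n" for j using zK[OF that] g(2) by auto
    define a where "a = (\<lambda>i j. c (z i) (T (z j)))"
    have dz: "dist (z j) (z (Suc j)) < \<delta>" if "j < n" for j
    proof -
      have "dist (real j / real n) (real (Suc j) / real n) = 1 / real n"
        using n2 by (simp add: dist_real_def field_simps)
      then have dd: "dist (real j / real n) (real (Suc j) / real n) < d" using nd by simp
      have "real j / real n \<in> {0..1}" "real (Suc j) / real n \<in> {0..1}"
        using that n2 by (auto simp: field_simps)
      then show ?thesis unfolding z_def using d(2) dd by blast
    qed
    have trm: "a j j + a (Suc j) (Suc j) - a j (Suc j) - a (Suc j) j \<ge> - (e * dist (z j) (z (Suc j)))"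
      if "j < n" for j
      using \<delta>(2)[OF zK zK dz[OF that]] that unfolding a_def by fastforce
    have sumd: "(\<Sum>j<n. dist (z j) (z (Suc j))) \<le> B"
      unfolding z_def using n2 by (intro B) (auto simp: divide_right_mono)
    have S: "(\<Sum>j<n. a j j + a (Suc j) (Suc j) - a j (Suc j) - a (Suc j) j) \<ge> - (e * B)"
    proof -
      have "(\<Sum>j<n. a j j + a (Suc j) (Suc j) - a j (Suc j) - a (Suc j) j) \<ge> (\<Sum>j<n. - (e * dist (z j) (z (Suc j))))"
        by (rule sum_mono) (use trm in auto)
      also have "(\<Sum>j<n. - (e * dist (z j) (z (Suc j)))) = - (e * (\<Sum>j<n. dist (z j) (z (Suc j))))"
        by (simp add: sum_distrib_left sum_negf)
      finally show ?thesis using sumd e by (smt (verit) mult_left_mono)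
    qed
    have c1: "ereal (c (z 0) (T (z n)) + (\<Sum>j=1..<n. c (z j) (T (z j)))
             - (\<Sum>j<n. c (z j) (T (z (Suc j))))) \<le> Ifun c \<Gamma> (z 0) (T (z n))"
      by (rule chain[OF n2]) (use GT zX in auto)
    define w where "w = (\<lambda>j. z (n - j))"
    have c2: "ereal (c (w 0) (T (w n)) + (\<Sum>j=1..<n. c (w j) (T (w j)))
             - (\<Sum>j<n. c (w j) (T (w (Suc j))))) \<le> Ifun c \<Gamma> (w 0) (T (w n))"
      by (rule chain[OF n2]) (use GT zX in \<open>auto simp: w_def\<close>)
    have alg: "(c (z 0) (T (z n)) + (\<Sum>j=1..<n. c (z j) (T (z j)))
             - (\<Sum>j<n. c (z j) (T (z (Suc j))))) + (c (w 0) (T (w n)) + (\<Sum>j=1..<n. c (w j) (T (w j)))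
             - (\<Sum>j<n. c (w j) (T (w (Suc j))))) \<ge> \<Delta> - e * B"
    proof -
      have "(c (z 0) (T (z n)) + (\<Sum>j=1..<n. c (z j) (T (z j)))
             - (\<Sum>j<n. c (z j) (T (z (Suc j))))) + (c (w 0) (T (w n)) + (\<Sum>j=1..<n. c (w j) (T (w j)))
             - (\<Sum>j<n. c (w j) (T (w (Suc j)))))
         = (a 0 n + (\<Sum>j=1..<n. a j j) - (\<Sum>j<n. a j (Suc j)))
       + (a n 0 + (\<Sum>j=1..<n. a (n-j) (n-j)) - (\<Sum>j<n. a (n-j) (n - Suc j)))"
        unfolding a_def w_def by simp
      also have "\<dots> = a 0 n + a n 0 - a 0 0 - a n n
         + (\<Sum>j<n. a j j + a (Suc j) (Suc j) - a j (Suc j) - a (Suc j) j)"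
        using n2 by (intro algebra_aux) auto
      also have "a 0 n + a n 0 - a 0 0 - a n n = \<Delta>"
        unfolding a_def \<Delta>_def using z0 zn yT y'T by simp
      finally show ?thesis using S by linarith
    qed
    have "ereal (\<Delta> - e * B) \<le> ereal (c (z 0) (T (z n)) + (\<Sum>j=1..<n. c (z j) (T (z j)))
             - (\<Sum>j<n. c (z j) (T (z (Suc j))))) + ereal (c (w 0) (T (w n)) + (\<Sum>j=1..<n. c (w j) (T (w j)))
             - (\<Sum>j<n. c (w j) (T (w (Suc j)))))"
      using alg by simp
    also have "\<dots> \<le> Ifun c \<Gamma> (z 0) (T (z n)) + Ifun c \<Gamma> (w 0) (T (w n))"
      by (rule add_mono[OF c1 c2])
    also have "\<dots> = Ifun c \<Gamma> x y + Ifun c \<Gamma> x' y'"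
      using z0 zn yT y'T by (simp add: w_def)
    finally show ?thesis .
  qed
  show ?thesis unfolding \<Gamma>_def[symmetric] \<Delta>_def[symmetric]
  proof (rule ereal_le_epsilon2)
    fix e :: real assume e: "e > 0"
    define e' where "e' = e / (B + 1)"
    have e': "e' > 0" "e' * B \<le> e" using e B0 by (auto simp: e'_def field_simps)
    have "ereal \<Delta> \<le> ereal (\<Delta> - e' * B) + ereal e" using e' by simp
    also have "\<dots> \<le> Ifun c \<Gamma> x y + Ifun c \<Gamma> x' y' + ereal e"
      by (rule add_right_mono[OF main[OF e'(1)]])
    finally show "ereal \<Delta> \<le> Ifun c \<Gamma> x y + Ifun c \<Gamma> x' y' + ereal e" .
  qed
qed

end
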